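(* Let $\gamma$ and $c$ be real constants and let $u(\xi)$, $v(\xi)$ be smooth functions of $\xi\in\mathbb{R}$ satisfying the travelling-wave system \[ -c u' + 3 u u' = - v\,\big(\gamma v'' + 3v^2\big)', \qquad -c v' + (uv)' = -\big(\gamma v'' + 3 v^2\big)', \] with boundary conditions $\lim_{\xi\to\pm\infty} u(\xi) = u_0$ and $\lim_{\xi\to\pm\infty} v(\xi) = 0$. Then for all $\xi$, \[ (u-c)^2\left(u - \tfrac12 v^2\right) = (u_0 - c)^2 u_0 . \]
   Context: This system is obtained from the Burgers–swept KdV system $u_t + 3uu_x = -v\partial_x(3v^2+\gamma v_{xx})$, $v_t + 6vv_x + \gamma v_{xxx} = -\partial_x(uv)$ by the travelling-wave ansatz $u(x,t)=u(\xi)$, $v(x,t)=v(\xi)$ with $\xi = x-ct$; primes denote $d/d\xi$. *)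

theory Defs
  imports "HOL-Analysis.Analysis"
begin

definition smooth :: "(real \<Rightarrow> real) \<Rightarrow> bool" where
  "smooth f \<longleftrightarrow> (\<forall>k x. ((deriv ^^ k) f) differentiable (at x))"

end

theory Submission
  imports Defs
begin

theorem lemma2p1:
  fixes u v :: "real \<Rightarrow> real" and \<gamma> c u0 :: real
  assumes su: "smooth u" and sv: "smooth v"
    and eq1: "\<And>\<xi>. - c * deriv u \<xi> + 3 * u \<xi> * deriv u \<xi>
                 = - v \<xi> * deriv (\<lambda>x. \<gamma> * deriv (deriv v) x + 3 * (v x)^2) \<xi>"
    and eq2: "\<And>\<xi>. - c * deriv v \<xi> + deriv (\<lambda>x. u x * v x) \<xi>
                 = - deriv (\<lambda>x. \<gamma> * deriv (deriv v) x + 3 * (v x)^2) \<xi>"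
    and u_top: "(u \<longlongrightarrow> u0) at_top" and u_bot: "(u \<longlongrightarrow> u0) at_bot"
    and v_top: "(v \<longlongrightarrow> 0) at_top" and v_bot: "(v \<longlongrightarrow> 0) at_bot"
  shows "\<forall>\<xi>. (u \<xi> - c)^2 * (u \<xi> - (v \<xi>)^2 / 2) = (u0 - c)^2 * u0"
proof
  fix \<xi>
  define F where "F = (\<lambda>x. (u x - c)^2 * (u x - (v x)^2 / 2))"
  have du: "\<And>x. (u has_real_derivative deriv u x) (at x)"
    using su unfolding smooth_def
    by (metis funpow_0 DERIV_deriv_iff_real_differentiable)
  have dv: "\<And>x. (v has_real_derivative deriv v x) (at x)"
    using sv unfolding smooth_def
    by (metis funpow_0 DERIV_deriv_iff_real_differentiable)
  have duv: "\<And>x. deriv (\<lambda>x. u x * v x) x = deriv u x * v x + u x * deriv v x"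
  proof -
    fix x
    have "((\<lambda>x. u x * v x) has_real_derivative u x * deriv v x + deriv u x * v x) (at x)"
      using DERIV_mult[OF du[of x] dv[of x]] by (simp add: algebra_simps)
    then show "deriv (\<lambda>x. u x * v x) x = deriv u x * v x + u x * deriv v x"
      using DERIV_imp_deriv by fastforce
  qed
  have key: "\<And>x. (3 * u x - c) * deriv u x = v x * (deriv u x * v x + u x * deriv v x - c * deriv v x)"
  proof -
    fix x
    have a: "- c * deriv u x + 3 * u x * deriv u x
                 = - v x * deriv (\<lambda>x. \<gamma> * deriv (deriv v) x + 3 * (v x)^2) x" by (rule eq1)
    have b: "deriv (\<lambda>x. \<gamma> * deriv (deriv v) x + 3 * (v x)^2) x = c * deriv v x - (deriv u x * v x + u x * deriv v x)"
      using eq2[of x] duv[of x] by linarith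
    show "?thesis x" using a b by (simp add: algebra_simps)
  qed
  have dF: "\<And>x. (F has_real_derivative 0) (at x)"
  proof -
    fix x
    have "(F has_real_derivative
       2 * (u x - c) * deriv u x * (u x - (v x)^2 / 2) + (u x - c)^2 * (deriv u x - v x * deriv v x)) (at x)"
      unfolding F_def
      by (auto intro!: derivative_eq_intros du dv simp: power2_eq_square algebra_simps)
    moreover have "2 * (u x - c) * deriv u x * (u x - (v x)^2 / 2) + (u x - c)^2 * (deriv u x - v x * deriv v x) = 0"
    proof -
      have "2 * (u x - c) * deriv u x * (u x - (v x)^2 / 2) + (u x - c)^2 * (deriv u x - v x * deriv v x)
        = (u x - c) * ((3 * u x - c) * deriv u x - v x * (deriv u x * v x + u x * deriv v x - c * deriv v x))"
        by (simp add: algebra_simps power2_eq_square)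
      then show ?thesis using key[of x] by simp
    qed
    ultimately show "(F has_real_derivative 0) (at x)" by simp
  qed
  have const: "\<And>x. F x = F \<xi>" using dF DERIV_isconst_all by blast
  have lim: "(F \<longlongrightarrow> (u0 - c)^2 * (u0 - 0^2/2)) at_top"
    unfolding F_def by (intro tendsto_intros u_top v_top) auto
  have lim2: "(F \<longlongrightarrow> F \<xi>) at_top"
  proof -
    have "F = (\<lambda>_. F \<xi>)" using const by auto
    then show ?thesis by (metis tendsto_const)
  qed
  have "F \<xi> = (u0 - c)^2 * (u0 - 0^2/2)"
    using tendsto_unique[OF _ lim2 lim] by simp
  then show "(u \<xi> - c)^2 * (u \<xi> - (v \<xi>)^2 / 2) = (u0 - c)^2 * u0"
    by (simp add: F_def)
qed

end
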